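(* Let $\mu,\epsilon,\delta>0$ and let $f:\mathbb{R}^d\to\mathbb{R}$ be differentiable, $\mu$-strongly convex, with $(1/\epsilon)$-Lipschitz gradient and minimizer $x^\ast$. Let $(A_k)_{k\ge0}$ be a nondecreasing sequence of positive numbers, $\tau_k=(A_{k+1}-A_k)/A_{k+1}$, and $E_k=A_k\big(\frac\mu2\|x^\ast-z_k\|^2+f(y_k)-f(x^\ast)\big)$. Suppose that for all $k$ $$x_k=\frac{\tau_k}{1+\tau_k}z_k+\frac1{1+\tau_k}y_k,\qquad z_{k+1}-z_k=\tau_k\Big(x_k-z_k-\frac1\mu\nabla f(x_k)\Big),\qquad y_{k+1}=x_k-\epsilon\nabla f(x_k).$$ Then $$\frac{E_{k+1}-E_k}{\delta}\le\frac{A_{k+1}}{\delta}\Big(\frac{\tau_k^2}{2\mu}-\frac\epsilon2\Big)\|\nabla f(x_k)\|^2+\frac{A_{k+1}}{\delta}\Big(\frac{\tau_k}{2\epsilon}-\frac{\mu}{2\tau_k}\Big)\|x_k-y_k\|^2.$$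
   Context: $\|\cdot\|$ is the Euclidean norm; $\mu$-strong convexity means $f(y)\ge f(x)+\langle\nabla f(x),y-x\rangle+\frac\mu2\|y-x\|^2$. *)

theory Defs
  imports "HOL-Analysis.Analysis"
begin

definition strongly_convex_with :: "real \<Rightarrow> ('a::real_inner \<Rightarrow> real) \<Rightarrow> ('a \<Rightarrow> 'a) \<Rightarrow> bool" where
  "strongly_convex_with \<mu> f g \<longleftrightarrow>
     (\<forall>x y. f y \<ge> f x + inner (g x) (y - x) + \<mu> / 2 * (norm (y - x))\<^sup>2)"

end

theory Submission
  imports Defs
begin
lemma descent:
  fixes f :: "'a::real_inner \<Rightarrow> real" and g :: "'a \<Rightarrow> 'a"
  assumes grad: "\<And>u. (f has_derivative (\<lambda>h. inner (g u) h)) (at u)"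
    and lip: "\<And>u v. norm (g u - g v) \<le> L * norm (u - v)"
  shows "f (X + h) \<le> f X + inner (g X) h + L / 2 * (norm h)\<^sup>2"
proof -
  define \<psi> where "\<psi> s = f (X + s *\<^sub>R h) - s * inner (g X) h - L / 2 * s\<^sup>2 * (norm h)\<^sup>2" for s
  have d: "DERIV \<psi> s :> inner (g (X + s *\<^sub>R h)) h - inner (g X) h - L * s * (norm h)\<^sup>2" for s
  proof -
    have "((\<lambda>s. X + s *\<^sub>R h) has_derivative (\<lambda>d. d *\<^sub>R h)) (at s)"
      by (auto intro!: derivative_eq_intros)
    from has_derivative_compose[OF this grad]
    have "((\<lambda>s. f (X + s *\<^sub>R h)) has_derivative (\<lambda>d. d * inner (g (X + s *\<^sub>R h)) h)) (at s)"
      by simp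
    hence "DERIV (\<lambda>s. f (X + s *\<^sub>R h)) s :> inner (g (X + s *\<^sub>R h)) h"
      unfolding has_field_derivative_def by (subst mult.commute[abs_def]) simp
    then show ?thesis unfolding \<psi>_def
      by (auto intro!: derivative_eq_intros simp: power2_eq_square algebra_simps)
  qed
  have nonpos: "inner (g (X + s *\<^sub>R h)) h - inner (g X) h - L * s * (norm h)\<^sup>2 \<le> 0" if "0 \<le> s" for s
  proof -
    have "inner (g (X + s *\<^sub>R h)) h - inner (g X) h = inner (g (X + s *\<^sub>R h) - g X) h"
      by (simp add: inner_diff_left)
    also have "\<dots> \<le> norm (g (X + s *\<^sub>R h) - g X) * norm h" by (rule norm_cauchy_schwarz)
    also have "\<dots> \<le> L * norm (s *\<^sub>R h) * norm h"
      using lip[of "X + s *\<^sub>R h" X] by (simp add: mult_right_mono)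
    also have "\<dots> = L * s * (norm h)\<^sup>2" using that by (simp add: power2_eq_square)
    finally show ?thesis by simp
  qed
  have "\<psi> 1 \<le> \<psi> 0"
    by (rule DERIV_nonpos_imp_nonincreasing[of 0 1 \<psi>]) (use d nonpos in \<open>auto intro!: exI\<close>)
  then show ?thesis unfolding \<psi>_def by simp
qed
theorem corollary1:
  fixes f :: "'a::euclidean_space \<Rightarrow> real" and g :: "'a \<Rightarrow> 'a"
    and \<mu> \<epsilon> \<delta> :: real and xstar :: 'a
    and A :: "nat \<Rightarrow> real" and x y z :: "nat \<Rightarrow> 'a" and k :: nat
  assumes pos: "\<mu> > 0" "\<epsilon> > 0" "\<delta> > 0"
    and grad: "\<And>u. (f has_derivative (\<lambda>h. inner (g u) h)) (at u)"
    and sconv: "strongly_convex_with \<mu> f g"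
    and lip: "\<And>u v. norm (g u - g v) \<le> (1 / \<epsilon>) * norm (u - v)"
    and minim: "\<And>u. f xstar \<le> f u"
    and Apos: "\<And>n. A n > 0"
    and Amono: "mono A"
    and xdef: "\<And>n. x n = (((A (Suc n) - A n) / A (Suc n)) / (1 + (A (Suc n) - A n) / A (Suc n))) *\<^sub>R z n
                      + (1 / (1 + (A (Suc n) - A n) / A (Suc n))) *\<^sub>R y n"
    and zstep: "\<And>n. z (Suc n) - z n = ((A (Suc n) - A n) / A (Suc n)) *\<^sub>R (x n - z n - (1 / \<mu>) *\<^sub>R g (x n))"
    and ystep: "\<And>n. y (Suc n) = x n - \<epsilon> *\<^sub>R g (x n)"
  shows "(let \<tau> = (\<lambda>n. (A (Suc n) - A n) / A (Suc n));
              E = (\<lambda>n. A n * (\<mu> / 2 * (norm (xstar - z n))\<^sup>2 + f (y n) - f xstar))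
          in (E (Suc k) - E k) / \<delta>
             \<le> A (Suc k) / \<delta> * ((\<tau> k)\<^sup>2 / (2 * \<mu>) - \<epsilon> / 2) * (norm (g (x k)))\<^sup>2
               + A (Suc k) / \<delta> * (\<tau> k / (2 * \<epsilon>) - \<mu> / (2 * \<tau> k)) * (norm (x k - y k))\<^sup>2)"
proof -
  define t where "t = (A (Suc k) - A k) / A (Suc k)"
  define X where "X = x k"
  define Y where "Y = y k"
  define Z where "Z = z k"
  define G where "G = g X"
  define u where "u = X - Z"
  define B where "B = xstar - X"
  have AS: "A (Suc k) > 0" "A k > 0" using Apos by auto
  have mono: "A k \<le> A (Suc k)" using Amono by (simp add: mono_def)
  have t0: "t \<ge> 0" using AS mono by (simp add: t_def)
  have t1: "t \<le> 1" using AS by (simp add: t_def field_simps)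
  have Ak: "A k = (1 - t) * A (Suc k)" using AS by (simp add: t_def field_simps)
  have hx: "(1 + t) *\<^sub>R X = t *\<^sub>R Z + Y"
  proof -
    have "X = (t / (1 + t)) *\<^sub>R Z + (1 / (1 + t)) *\<^sub>R Y"
      using xdef[of k] by (simp add: X_def Y_def Z_def t_def)
    hence "(1 + t) *\<^sub>R X = (1 + t) *\<^sub>R ((t / (1 + t)) *\<^sub>R Z + (1 / (1 + t)) *\<^sub>R Y)" by simp
    also have "\<dots> = t *\<^sub>R Z + Y" using t0 by (simp add: scaleR_add_right)
    finally show ?thesis .
  qed
  have hY: "Y = X + t *\<^sub>R u"
  proof -
    have "Y = (1 + t) *\<^sub>R X - t *\<^sub>R Z" using hx by (simp add: algebra_simps)
    thus ?thesis by (simp add: u_def algebra_simps)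
  qed
  have hZ: "Z = X - u" by (simp add: u_def)
  have hZ': "xstar - z (Suc k) = B + (1 - t) *\<^sub>R u + (t / \<mu>) *\<^sub>R G"
  proof -
    have "z (Suc k) = Z + t *\<^sub>R (X - Z - (1 / \<mu>) *\<^sub>R G)"
      using zstep[of k] by (simp add: Z_def X_def G_def t_def algebra_simps)
    thus ?thesis by (simp add: B_def u_def algebra_simps)
  qed
  have lipe: "\<And>u v. norm (g u - g v) \<le> (1 / \<epsilon>) * norm (u - v)" by (rule lip)
  have desc: "\<And>X h. f (X + h) \<le> f X + inner (g X) h + (1 / \<epsilon>) / 2 * (norm h)\<^sup>2"
    by (rule descent[OF grad lipe])
  have sc: "\<And>a b. f b \<ge> f a + inner (g a) (b - a) + \<mu> / 2 * (norm (b - a))\<^sup>2"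
    using sconv by (simp add: strongly_convex_with_def)
  have muL: "\<mu> \<le> 1 / \<epsilon>"
  proof -
    obtain b :: 'a where b: "b \<in> Basis" using nonempty_Basis by blast
    have nb: "norm b = 1" using b by simp
    have "f (0 + b) \<le> f 0 + inner (g 0) b + (1 / \<epsilon>) / 2 * (norm b)\<^sup>2" by (rule desc)
    moreover have "f b \<ge> f 0 + inner (g 0) (b - 0) + \<mu> / 2 * (norm (b - 0))\<^sup>2" by (rule sc)
    ultimately show ?thesis using nb by simp
  qed
  have Y': "y (Suc k) = X + (- \<epsilon>) *\<^sub>R G" using ystep[of k] by (simp add: X_def G_def)
  have e1: "f (y (Suc k)) \<le> f X - \<epsilon> / 2 * (norm G)\<^sup>2"
  proof -
    have "f (y (Suc k)) \<le> f X + inner G ((- \<epsilon>) *\<^sub>R G) + (1 / \<epsilon>) / 2 * (norm ((- \<epsilon>) *\<^sub>R G))\<^sup>2"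
      unfolding Y' G_def by (rule desc)
    also have "\<dots> = f X - \<epsilon> / 2 * (norm G)\<^sup>2"
      using pos by (simp add: power2_eq_square power_mult_distrib power2_norm_eq_inner[symmetric] field_simps)
    finally show ?thesis .
  qed
  have s1: "f xstar \<ge> f X + inner G B + \<mu> / 2 * (norm B)\<^sup>2"
    using sc[of X xstar] by (simp add: G_def B_def)
  have s2: "f Y \<ge> f X + t * inner G u + \<mu> / 2 * t\<^sup>2 * (norm u)\<^sup>2"
    using sc[of X Y] by (simp add: G_def hY power_mult_distrib)
  have e2: "t * (f X - f xstar) \<le> t * (- inner G B - \<mu> / 2 * (norm B)\<^sup>2)"
    using s1 t0 by (intro mult_left_mono) auto
  have e3: "(1 - t) * (f X - f Y) \<le> (1 - t) * (- t * inner G u - \<mu> / 2 * t\<^sup>2 * (norm u)\<^sup>2)"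
    using s2 t1 by (intro mult_left_mono) auto
  define D where "D = \<mu> / 2 * (norm (xstar - z (Suc k)))\<^sup>2 + f (y (Suc k)) - f xstar
     - (1 - t) * (\<mu> / 2 * (norm (xstar - Z))\<^sup>2 + f Y - f xstar)"
  have N1: "(norm (xstar - z (Suc k)))\<^sup>2 = (norm B)\<^sup>2 + (1 - t)\<^sup>2 * (norm u)\<^sup>2 + (t / \<mu>)\<^sup>2 * (norm G)\<^sup>2
      + 2 * (1 - t) * inner B u + 2 * (t / \<mu>) * inner G B + 2 * (1 - t) * (t / \<mu>) * inner G u"
  proof -
    have "\<And>a b c :: 'a. (norm (a + b + c))\<^sup>2 = (norm a)\<^sup>2 + (norm b)\<^sup>2 + (norm c)\<^sup>2 + 2 * inner a b + 2 * inner c a + 2 * inner b c"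
      by (simp add: power2_norm_eq_inner inner_add_left inner_add_right inner_commute)
    from this[of B "(1 - t) *\<^sub>R u" "(t / \<mu>) *\<^sub>R G"]
    show ?thesis unfolding hZ' by (simp add: power_mult_distrib inner_commute power_divide mult.assoc) (simp add: algebra_simps)
  qed
  have N2: "(norm (xstar - Z))\<^sup>2 = (norm B)\<^sup>2 + 2 * inner B u + (norm u)\<^sup>2"
    unfolding hZ by (simp add: B_def power2_norm_eq_inner inner_add_left inner_add_right inner_diff_left inner_diff_right inner_commute algebra_simps)
  have D1: "D = \<mu> / 2 * (norm (xstar - z (Suc k)))\<^sup>2 - (1 - t) * (\<mu> / 2 * (norm (xstar - Z))\<^sup>2)
      + (f (y (Suc k)) - f X) + t * (f X - f xstar) + (1 - t) * (f X - f Y)"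
    unfolding D_def by (simp add: algebra_simps)
  have D2: "D \<le> \<mu> / 2 * (norm (xstar - z (Suc k)))\<^sup>2 - (1 - t) * (\<mu> / 2 * (norm (xstar - Z))\<^sup>2)
      - \<epsilon> / 2 * (norm G)\<^sup>2 + t * (- inner G B - \<mu> / 2 * (norm B)\<^sup>2)
      + (1 - t) * (- t * inner G u - \<mu> / 2 * t\<^sup>2 * (norm u)\<^sup>2)"
    using D1 e1 e2 e3 by linarith
  have D3: "D \<le> (t\<^sup>2 / (2 * \<mu>) - \<epsilon> / 2) * (norm G)\<^sup>2 + (\<mu> * t^3 / 2 - \<mu> * t / 2) * (norm u)\<^sup>2"
  proof -
    have "\<mu> / 2 * (norm (xstar - z (Suc k)))\<^sup>2 - (1 - t) * (\<mu> / 2 * (norm (xstar - Z))\<^sup>2)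
      - \<epsilon> / 2 * (norm G)\<^sup>2 + t * (- inner G B - \<mu> / 2 * (norm B)\<^sup>2)
      + (1 - t) * (- t * inner G u - \<mu> / 2 * t\<^sup>2 * (norm u)\<^sup>2)
      = (t\<^sup>2 / (2 * \<mu>) - \<epsilon> / 2) * (norm G)\<^sup>2 + (\<mu> * t^3 / 2 - \<mu> * t / 2) * (norm u)\<^sup>2"
      unfolding N1 N2 using pos by (simp add: field_simps power2_eq_square power3_eq_cube inner_commute)
    thus ?thesis using D2 by linarith
  qed
  have XY: "(norm (X - Y))\<^sup>2 = t\<^sup>2 * (norm u)\<^sup>2" by (simp add: hY power_mult_distrib)
  have D4: "D \<le> (t\<^sup>2 / (2 * \<mu>) - \<epsilon> / 2) * (norm G)\<^sup>2 + (t / (2 * \<epsilon>) - \<mu> / (2 * t)) * (norm (X - Y))\<^sup>2"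
  proof (cases "t = 0")
    case True thus ?thesis using D3 by simp
  next
    case False
    hence tp: "t > 0" using t0 by simp
    have "\<mu> * t^3 / 2 \<le> t^3 / (2 * \<epsilon>)"
      using muL tp pos by (simp add: field_simps mult_left_mono)
    hence "(\<mu> * t^3 / 2 - \<mu> * t / 2) * (norm u)\<^sup>2 \<le> (t^3 / (2 * \<epsilon>) - \<mu> * t / 2) * (norm u)\<^sup>2"
      by (intro mult_right_mono) auto
    also have "\<dots> = (t / (2 * \<epsilon>) - \<mu> / (2 * t)) * (norm (X - Y))\<^sup>2"
      unfolding XY using tp pos by (simp add: field_simps power2_eq_square power3_eq_cube)
    finally show ?thesis using D3 by linarith
  qed
  have E: "A (Suc k) * (\<mu> / 2 * (norm (xstar - z (Suc k)))\<^sup>2 + f (y (Suc k)) - f xstar)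
      - A k * (\<mu> / 2 * (norm (xstar - z k))\<^sup>2 + f (y k) - f xstar) = A (Suc k) * D"
    unfolding D_def Ak Y_def Z_def by (simp add: algebra_simps)
  have fin: "A (Suc k) * D / \<delta> \<le> A (Suc k) / \<delta> * ((t\<^sup>2 / (2 * \<mu>) - \<epsilon> / 2) * (norm G)\<^sup>2 + (t / (2 * \<epsilon>) - \<mu> / (2 * t)) * (norm (X - Y))\<^sup>2)"
  proof -
    have "A (Suc k) / \<delta> * D \<le> A (Suc k) / \<delta> * ((t\<^sup>2 / (2 * \<mu>) - \<epsilon> / 2) * (norm G)\<^sup>2 + (t / (2 * \<epsilon>) - \<mu> / (2 * t)) * (norm (X - Y))\<^sup>2)"
      using D4 AS pos by (intro mult_left_mono) auto
    thus ?thesis by simp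
  qed
  show ?thesis
    unfolding Let_def E[folded t_def]
    using fin unfolding t_def[symmetric] G_def X_def Y_def by (simp add: algebra_simps)
qed

end
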